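(* Let $\theta$ be a $p$-dimensional functional of $d$-dimensional distribution functions, $m\in\mathbb N$ the training sample size, $T>0$ with $Tm\in\mathbb N$, and $\alpha\in(0,1)$. Assume the following alternative setting: the change occurs at position $\lfloor mc\rfloor$ for some $c\in(1,T+1)$; there are strictly stationary $\mathbb R^d$-valued processes $\{Z_t(1)\}_{t\in\mathbb Z}$, $\{Z_t(2)\}_{t\in\mathbb Z}$ with marginal distribution functions $F^{(1)},F^{(2)}$ such that $\theta(F^{(1)})\ne\theta(F^{(2)})$, and for each $m$ (the observations forming a triangular array $X_t=X_{m,t}$) $$(X_1,\dots,X_{\lfloor mc\rfloor})\overset{\mathcal D}{=}(Z_1(1),\dots,Z_{\lfloor mc\rfloor}(1)),\qquad (X_{\lfloor mc\rfloor+1},\dots,X_{m(T+1)})\overset{\mathcal D}{=}(Z_{\lfloor mc\rfloor+1}(2),\dots,Z_{m(T+1)}(2));$$ there exist standard $p$-dimensional Brownian motions $W_1,W_2$ such that jointly $$\Big(\big\{\tfrac1{\sqrt m}\textstyle\sum_{t=1}^{\lfloor ms\rfloor}\mathcal{IF}(Z_t(1),F^{(1)},\theta)\big\}_{s\in[0,c]},\ \big\{\tfrac1{\sqrt m}\sum_{t=\lfloor mc\rfloor+1}^{\lfloor ms\rfloor}\mathcal{IF}(Z_t(2),F^{(2)},\theta)\big\}_{s\in[c,T+1]}\Big)\Rightarrow\Big(\{\Sigma_{F^{(1)}}^{1/2}W_1(s)\}_{s\in[0,c]},\ \{\Sigma_{F^{(2)}}^{1/2}(W_2(s)-W_2(c))\}_{s\in[c,T+1]}\Big),$$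 where $\Sigma_{F^{(\ell)}}=\sum_{t\in\mathbb Z}\mathrm{Cov}(\mathcal{IF}(Z_0(\ell),F^{(\ell)},\theta),\mathcal{IF}(Z_t(\ell),F^{(\ell)},\theta))$, $\ell=1,2$, are positive definite; and both phases satisfy the remainder condition, i.e. for $\ell=1,2$ the remainders $R^{(\ell)}_{i,j}=\theta(\hat F_i^j)-\theta(F^{(\ell)})-\frac1{j-i+1}\sum_{t=i}^j\mathcal{IF}(X_t,F^{(\ell)},\theta)$, computed from observations of phase $\ell$, satisfy $\sup_{i<j}(j-i+1)|R^{(\ell)}_{i,j}|=o_{\mathbb P}(n^{1/2})$ with $n$ the length of the phase. Let $\hat\Sigma_m$ be a consistent estimator of $\Sigma_{F^{(1)}}$ based on $X_1,\dots,X_m$, and let $w_\alpha:[0,T]\to\mathbb R^+$ be an increasing function satisfying $$\mathbb P\Big(\sup_{t\in[1,T+1]}\sup_{s\in[1,t]}\frac{B(s,t)^\top B(s,t)}{w_\alpha(t-1)}>1\Big)=\alpha,$$ where $B(s,t)=tW(s)-sW(t)$ for a standard $p$-dimensional Brownian motion $W$. Then $$\lim_{m\to\infty}\mathbb P\Big(\max_{1\le k\le Tm}\frac{\hat D_m(k)}{w_\alpha(k/m)}>1\Big)=1.$$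
   Context: The influence function is $\mathcal{IF}(x,F,\theta)=\lim_{\varepsilon\searrow0}\varepsilon^{-1}\big(\theta((1-\varepsilon)F+\varepsilon\delta_x)-\theta(F)\big)$ with $\delta_x(z)=I\{x\le z\}$ (componentwise). For $i\le j$, $\hat F_i^j(z)=\frac1{j-i+1}\sum_{t=i}^jI\{X_t\le z\}$ and $\hat\theta_i^j=\theta(\hat F_i^j)$; $\hat\theta_z^u=0$ if $z>u$. The detector is $\hat D_m(k)=m^{-3}\max_{j=0}^{k-1}(m+j)^2(k-j)^2(\hat\theta_1^{m+j}-\hat\theta_{m+j+1}^{m+k})^\top\hat\Sigma_m^{-1}(\hat\theta_1^{m+j}-\hat\theta_{m+j+1}^{m+k})$. *)

theory Defs
  imports "HOL-Probability.Probability"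
begin

text \<open>Distribution functions on R^d are represented as functions real^'d => real;
  the order on real^'d is the componentwise one (library instance).\<close>

definition dirac_cdf :: "real^'d \<Rightarrow> (real^'d \<Rightarrow> real)" where
  "dirac_cdf x = (\<lambda>z. if x \<le> z then 1 else 0)"

definition infl_fun ::
  "real^'d \<Rightarrow> (real^'d \<Rightarrow> real) \<Rightarrow> ((real^'d \<Rightarrow> real) \<Rightarrow> real^'p) \<Rightarrow> real^'p" where
  "infl_fun x F \<theta> =
     Lim (at_right 0)
       (\<lambda>\<epsilon>::real. (1/\<epsilon>) *\<^sub>R
          (\<theta> (\<lambda>z. (1 - \<epsilon>) * F z + \<epsilon> * dirac_cdf x z) - \<theta> F))"

definition emp_cdf :: "(nat \<Rightarrow> real^'d) \<Rightarrow> nat \<Rightarrow> nat \<Rightarrow> (real^'d \<Rightarrow> real)" where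
  "emp_cdf x i j = (\<lambda>z. (1 / real (j - i + 1)) * (\<Sum>t=i..j. dirac_cdf (x t) z))"

definition theta_hat ::
  "((real^'d \<Rightarrow> real) \<Rightarrow> real^'p) \<Rightarrow> (nat \<Rightarrow> real^'d) \<Rightarrow> nat \<Rightarrow> nat \<Rightarrow> real^'p" where
  "theta_hat \<theta> x i j = (if i \<le> j then \<theta> (emp_cdf x i j) else 0)"

definition detector ::
  "((real^'d \<Rightarrow> real) \<Rightarrow> real^'p) \<Rightarrow> (nat \<Rightarrow> real^'d) \<Rightarrow> real^'p^'p \<Rightarrow> nat \<Rightarrow> nat \<Rightarrow> real" where
  "detector \<theta> x Sig m k =
     (1 / real m ^ 3) *
     Max ((\<lambda>j. (real (m + j))\<^sup>2 * (real (k - j))\<^sup>2 *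
            ((theta_hat \<theta> x 1 (m + j) - theta_hat \<theta> x (m + j + 1) (m + k)) \<bullet>
             (matrix_inv Sig *v (theta_hat \<theta> x 1 (m + j) - theta_hat \<theta> x (m + j + 1) (m + k)))))
          ` {0..<k})"

definition pos_def_mat :: "real^'p^'p \<Rightarrow> bool" where
  "pos_def_mat A \<longleftrightarrow> transpose A = A \<and> (\<forall>v. v \<noteq> 0 \<longrightarrow> v \<bullet> (A *v v) > 0)"

definition psd_mat :: "real^'p^'p \<Rightarrow> bool" where
  "psd_mat A \<longleftrightarrow> transpose A = A \<and> (\<forall>v. v \<bullet> (A *v v) \<ge> 0)"

definition mat_sqrt :: "real^'p^'p \<Rightarrow> real^'p^'p" where
  "mat_sqrt A = (THE S. psd_mat S \<and> S ** S = A)"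

definition cdf_of :: "'a measure \<Rightarrow> ('a \<Rightarrow> real^'d) \<Rightarrow> (real^'d \<Rightarrow> real)" where
  "cdf_of P Y = (\<lambda>z. measure P {\<omega> \<in> space P. Y \<omega> \<le> z})"

definition cov_mat :: "'a measure \<Rightarrow> ('a \<Rightarrow> real^'p) \<Rightarrow> ('a \<Rightarrow> real^'p) \<Rightarrow> real^'p^'p" where
  "cov_mat P U V =
     (\<chi> i j. integral\<^sup>L P (\<lambda>\<omega>. (U \<omega> $ i - integral\<^sup>L P (\<lambda>\<eta>. U \<eta> $ i)) *
                                  (V \<omega> $ j - integral\<^sup>L P (\<lambda>\<eta>. V \<eta> $ j))))"

definition strictly_stationary :: "'a measure \<Rightarrow> (int \<Rightarrow> 'a \<Rightarrow> real^'d) \<Rightarrow> bool" where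
  "strictly_stationary P Z \<longleftrightarrow>
     (\<forall>t. Z t \<in> borel_measurable P) \<and>
     (\<forall>(h::int) (n::nat).
        distr P (PiM {..<n} (\<lambda>_. borel)) (\<lambda>\<omega>. \<lambda>i\<in>{..<n}. Z (h + int i) \<omega>) =
        distr P (PiM {..<n} (\<lambda>_. borel)) (\<lambda>\<omega>. \<lambda>i\<in>{..<n}. Z (int i) \<omega>))"

definition std_BM :: "'a measure \<Rightarrow> (real \<Rightarrow> 'a \<Rightarrow> real^'p) \<Rightarrow> bool" where
  "std_BM N W \<longleftrightarrow>
     prob_space N \<and>
     (\<forall>t. W t \<in> borel_measurable N) \<and>
     (\<forall>\<omega>\<in>space N. W 0 \<omega> = 0) \<and>
     (\<forall>\<omega>\<in>space N. continuous_on {0..} (\<lambda>t. W t \<omega>)) \<and>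
     (\<forall>(ts::nat \<Rightarrow> real) (n::nat). 0 \<le> ts 0 \<longrightarrow> strict_mono ts \<longrightarrow>
        prob_space.indep_vars N (\<lambda>_. borel) (\<lambda>i \<omega>. W (ts (Suc i)) \<omega> - W (ts i) \<omega>) {..<n}) \<and>
     (\<forall>s t. 0 \<le> s \<longrightarrow> s < t \<longrightarrow>
        distributed N lborel (\<lambda>\<omega>. W t \<omega> - W s \<omega>)
          (\<lambda>x. ennreal (\<Prod>i\<in>UNIV. normal_density 0 (sqrt (t - s)) (x $ i))))"

definition outer_exp :: "'a measure \<Rightarrow> ('a \<Rightarrow> real) \<Rightarrow> real" where
  "outer_exp P f = Inf {integral\<^sup>L P h | h. integrable P h \<and> (\<forall>\<omega>\<in>space P. f \<omega> \<le> h \<omega>)}"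

definition sup_cont :: "real set \<Rightarrow> real set \<Rightarrow> (((real \<Rightarrow> real^'p) \<times> (real \<Rightarrow> real^'p)) \<Rightarrow> real) \<Rightarrow> bool" where
  "sup_cont A B g \<longleftrightarrow>
     (\<forall>x. \<forall>e>0. \<exists>\<delta>>0. \<forall>y.
        (\<forall>s\<in>A. dist (fst x s) (fst y s) < \<delta>) \<and> (\<forall>s\<in>B. dist (snd x s) (snd y s) < \<delta>)
        \<longrightarrow> \<bar>g x - g y\<bar> < e)"

text \<open>Weak convergence (Hoffmann-Joergensen sense, sup-norm) of random pairs of paths
  Y_m (on P) to a limit Y (on N) along the filter F.\<close>
definition weak_conv_paths ::
  "nat filter \<Rightarrow> real set \<Rightarrow> real set \<Rightarrow> 'a measure \<Rightarrow> (nat \<Rightarrow> 'a \<Rightarrow> (real \<Rightarrow> real^'p) \<times> (real \<Rightarrow> real^'p))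
     \<Rightarrow> 'b measure \<Rightarrow> ('b \<Rightarrow> (real \<Rightarrow> real^'p) \<times> (real \<Rightarrow> real^'p)) \<Rightarrow> bool" where
  "weak_conv_paths F A B P Y N Yl \<longleftrightarrow>
     (\<forall>g. bounded (range g) \<and> sup_cont A B g \<longrightarrow>
        ((\<lambda>m. outer_exp P (\<lambda>\<omega>. g (Y m \<omega>))) \<longlongrightarrow> integral\<^sup>L N (\<lambda>\<omega>. g (Yl \<omega>))) F)"

end

theory Submission
  imports Defs
begin

lemma vec_nth_meas[measurable]: "(\<lambda>v::('b::{real_normed_vector})^'n. v $ i) \<in> borel_measurable borel"
  by (intro borel_measurable_continuous_onI linear_continuous_on bounded_linear_vec_nth)

lemma vec_lambda_meas[measurable]:
  fixes g :: "'n::finite \<Rightarrow> 'a \<Rightarrow> 'b::euclidean_space"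
  assumes "\<And>k. g k \<in> borel_measurable M"
  shows "(\<lambda>\<omega>. (\<chi> k. g k \<omega>) :: 'b^'n) \<in> borel_measurable M"
proof -
  have "\<And>i. i \<in> Basis \<Longrightarrow> (\<lambda>\<omega>. (\<chi> k. g k \<omega>) \<bullet> i) \<in> borel_measurable M"
  proof -
    fix i :: "'b^'n" assume "i \<in> Basis"
    then obtain k u where k: "i = axis k u" "u \<in> Basis" unfolding Basis_vec_def by auto
    show "(\<lambda>\<omega>. (\<chi> k. g k \<omega>) \<bullet> i) \<in> borel_measurable M"
      unfolding k using assms by (simp add: inner_axis)
  qed
  then show ?thesis by (subst borel_measurable_euclidean_space) auto
qed

lemma det_meas[measurable]: fixes f :: "'a \<Rightarrow> real^'n^'n" assumes [measurable]: "f \<in> borel_measurable M"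
  shows "(\<lambda>x. det (f x)) \<in> borel_measurable M"
  unfolding det_def by measurable

lemma matrix_inv_singular:
  fixes E :: "real^'n^'n"
  assumes "\<not> invertible E"
  shows "matrix_inv E = matrix_inv (0::real^'n^'n)"
proof -
  have m0: "(mat 1::real^'n^'n) \<noteq> 0"
  proof
    assume "(mat 1::real^'n^'n) = 0"
    then have "(mat 1::real^'n^'n) $ undefined $ undefined = 0" by simp
    then show False by (simp add: mat_def)
  qed
  have z: "\<not> invertible (0::real^'n^'n)"
    using m0 unfolding invertible_def by simp
  have "(\<lambda>A'::real^'n^'n. E ** A' = mat 1 \<and> A' ** E = mat 1) = (\<lambda>A'. (0::real^'n^'n) ** A' = mat 1 \<and> A' ** 0 = mat 1)"
    using assms z unfolding invertible_def by blast
  then show ?thesis unfolding matrix_inv_def by simp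
qed

lemma matrix_inv_right:
  fixes E :: "real^'n^'n"
  assumes "invertible E"
  shows "E ** matrix_inv E = mat 1"
  using assms unfolding invertible_def matrix_inv_def by (rule someI_ex[THEN conjunct1])

lemma matrix_inv_cramer:
  fixes E :: "real^'n^'n"
  assumes "det E \<noteq> 0"
  shows "matrix_inv E *v v = (\<chi> k. det(\<chi> i j. if j=k then v$i else E$i$j) / det E)"
proof -
  have "invertible E" using assms invertible_det_nz by blast
  then have "E *v (matrix_inv E *v v) = v"
    by (simp add: matrix_vector_mul_assoc matrix_inv_right)
  then show ?thesis using cramer[OF assms] by blast
qed

lemma quad_inv_meas[measurable]:
  fixes E :: "'a \<Rightarrow> real^'n^'n" and v :: "'a \<Rightarrow> real^'n"
  assumes Em: "E \<in> borel_measurable M" and vm: "v \<in> borel_measurable M"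
  shows "(\<lambda>\<omega>. v \<omega> \<bullet> (matrix_inv (E \<omega>) *v v \<omega>)) \<in> borel_measurable M"
proof -
  define C where "C = (\<lambda>\<omega> k. (\<chi> i j. if j=k then v \<omega>$i else E \<omega>$i$j) :: real^'n^'n)"
  have eq: "(\<lambda>\<omega>. v \<omega> \<bullet> (matrix_inv (E \<omega>) *v v \<omega>)) = (\<lambda>\<omega>. if det (E \<omega>) \<noteq> 0 then
      v \<omega> \<bullet> (\<chi> k. det (C \<omega> k) / det (E \<omega>))
      else v \<omega> \<bullet> (matrix_inv (0::real^'n^'n) *v v \<omega>))"
  proof (rule ext)
    fix \<omega> show "v \<omega> \<bullet> (matrix_inv (E \<omega>) *v v \<omega>) = (if det (E \<omega>) \<noteq> 0 then
      v \<omega> \<bullet> (\<chi> k. det (C \<omega> k) / det (E \<omega>))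
      else v \<omega> \<bullet> (matrix_inv (0::real^'n^'n) *v v \<omega>))"
    proof (cases "det (E \<omega>) = 0")
      case True
      then have "\<not> invertible (E \<omega>)" using invertible_det_nz by blast
      then have "matrix_inv (E \<omega>) = matrix_inv (0::real^'n^'n)" by (rule matrix_inv_singular)
      then show ?thesis using True by simp
    next
      case False then show ?thesis by (simp add: matrix_inv_cramer C_def)
    qed
  qed
  have cij: "(\<lambda>\<omega>. C \<omega> k $ i $ j) \<in> borel_measurable M" for k i j
  proof (cases "j = k")
    case True
    have "(\<lambda>\<omega>. v \<omega> $ i) \<in> borel_measurable M" using vm by measurable
    then show ?thesis using True by (simp add: C_def)
  next
    case False
    have "(\<lambda>\<omega>. E \<omega> $ i $ j) \<in> borel_measurable M" using Em by measurable
    then show ?thesis using False by (simp add: C_def)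
  qed
  have Cm: "(\<lambda>\<omega>. C \<omega> k) \<in> borel_measurable M" for k
  proof -
    have "(\<lambda>\<omega>. C \<omega> k) = (\<lambda>\<omega>. \<chi> i. \<chi> j. C \<omega> k $ i $ j)" by (simp add: vec_lambda_eta)
    also have "\<dots> \<in> borel_measurable M"
      by (intro vec_lambda_meas cij)
    finally show ?thesis .
  qed
  have dE: "(\<lambda>\<omega>. det (E \<omega>)) \<in> borel_measurable M" by (rule det_meas[OF Em])
  have dC: "(\<lambda>\<omega>. det (C \<omega> k)) \<in> borel_measurable M" for k by (rule det_meas[OF Cm])
  have f1: "(\<lambda>\<omega>. (\<chi> k. det (C \<omega> k) / det (E \<omega>)) :: real^'n) \<in> borel_measurable M"
    by (intro vec_lambda_meas borel_measurable_divide dC dE)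
  have f2: "(\<lambda>\<omega>. matrix_inv (0::real^'n^'n) *v v \<omega>) \<in> borel_measurable M"
    using borel_measurable_continuous_on[OF linear_continuous_on[OF matrix_vector_mul_bounded_linear[of "matrix_inv (0::real^'n^'n)"]] vm] .
  have p: "{\<omega> \<in> space M. det (E \<omega>) \<noteq> 0} \<in> sets M" using dE by measurable
  show ?thesis unfolding eq
    by (intro measurable_If borel_measurable_inner vm f1 f2 p)
qed

lemma norm_mv: fixes B :: "real^'n^'m" and u :: "real^'n"
  shows "norm (B *v u) \<le> real CARD('m) * real CARD('n) * norm B * norm u"
proof -
  have "\<bar>B$i$j\<bar> \<le> norm B" for i j
    using component_le_norm_cart[of "B$i" j] Finite_Cartesian_Product.norm_nth_le[of B i] by simp
  then have "onorm ((*v) B) \<le> real CARD('m) * real CARD('n) * norm B"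
    by (rule onorm_le_matrix_component)
  moreover have "norm (B *v u) \<le> onorm ((*v) B) * norm u"
    by (rule onorm[OF matrix_vector_mul_bounded_linear])
  ultimately show ?thesis by (meson mult_right_mono norm_ge_zero order_trans)
qed

lemma pd_lower:
  fixes A :: "real^'n^'n"
  assumes "pos_def_mat A"
  shows "\<exists>l>0. \<forall>u. l * (norm u)^2 \<le> u \<bullet> (A *v u)"
proof -
  let ?S = "{u::real^'n. norm u = 1}"
  let ?f = "\<lambda>u. u \<bullet> (A *v u)"
  have "?S = sphere 0 1" by (auto simp: sphere_def)
  then have cS: "compact ?S" by simp
  have "norm (axis undefined 1 :: real^'n) = 1" by (rule norm_axis_1)
  then have ne: "?S \<noteq> {}" by blast
  have cf: "continuous_on ?S ?f"
    by (intro continuous_intros linear_continuous_on matrix_vector_mul_bounded_linear)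
  obtain u0 where u0: "u0 \<in> ?S" "\<And>y. y \<in> ?S \<Longrightarrow> ?f u0 \<le> ?f y"
    using continuous_attains_inf[OF cS ne cf] by blast
  have "u0 \<noteq> 0" using u0(1) by auto
  then have pos: "?f u0 > 0" using assms unfolding pos_def_mat_def by blast
  have "?f u0 * (norm u)^2 \<le> ?f u" for u
  proof (cases "u = 0")
    case True then show ?thesis by simp
  next
    case False
    define a where "a = 1 / norm u"
    let ?w = "a *\<^sub>R u"
    have "norm ?w = 1" using False unfolding a_def by simp
    then have "?f u0 \<le> ?f ?w" by (intro u0(2)) simp
    also have "A *v ?w = a *\<^sub>R (A *v u)"
      by (rule matrix_vector_mult_scaleR)
    then have "?f ?w = a * a * ?f u" by simp
    finally have "?f u0 \<le> a * a * ?f u" .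
    moreover have "a * a * (norm u)^2 = 1" using False unfolding a_def by (simp add: power2_eq_square)
    ultimately have "?f u0 * (norm u)^2 \<le> (a * a * ?f u) * (norm u)^2"
      by (intro mult_right_mono) auto
    also have "\<dots> = ?f u" using \<open>a * a * (norm u)^2 = 1\<close> by (metis mult.commute mult.left_commute mult_1)
    finally show ?thesis .
  qed
  then show ?thesis using pos by blast
qed

lemma quad_inv_lower:
  fixes A E :: "real^'n^'n" and v :: "real^'n"
  defines "C \<equiv> real CARD('n) * real CARD('n)"
  assumes l: "l > 0" and lA: "\<And>u. l * (norm u)^2 \<le> u \<bullet> (A *v u)"
    and close: "norm (E - A) \<le> min 1 (l / (2*C))"
  shows "(l/2) / (C * (norm A + 1))^2 * (norm v)^2 \<le> v \<bullet> (matrix_inv E *v v)"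
proof -
  have Cpos: "C > 0" unfolding C_def by simp
  have key: "(l/2) * (norm u)^2 \<le> u \<bullet> (E *v u)" for u
  proof -
    have e: "u \<bullet> (E *v u) = u \<bullet> (A *v u) + u \<bullet> ((E - A) *v u)"
      by (simp add: matrix_vector_mult_diff_rdistrib inner_diff_right)
    have "\<bar>u \<bullet> ((E - A) *v u)\<bar> \<le> norm u * norm ((E - A) *v u)"
      by (rule Cauchy_Schwarz_ineq2)
    also have "\<dots> \<le> norm u * (C * norm (E - A) * norm u)"
      using norm_mv[of "E - A" u] unfolding C_def by (simp add: mult_left_mono)
    also have "\<dots> \<le> norm u * ((l / 2) * norm u)"
    proof -
      have "C * norm (E - A) \<le> C * (l / (2*C))" using close Cpos by (intro mult_left_mono) auto
      also have "\<dots> = l/2" using Cpos by simp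
      finally show ?thesis by (intro mult_left_mono mult_right_mono) auto
    qed
    finally have "\<bar>u \<bullet> ((E - A) *v u)\<bar> \<le> (l/2) * (norm u)^2" by (simp add: power2_eq_square algebra_simps)
    then show ?thesis using e lA[of u] by linarith
  qed
  have "inj ((*v) E)"
  proof (rule injI)
    fix x y assume "E *v x = E *v y"
    then have "E *v (x - y) = 0" by (simp add: matrix_vector_mult_diff_distrib)
    then have "(l/2) * (norm (x - y))^2 \<le> 0" using key[of "x - y"] by simp
    then have "norm (x - y) = 0" using l by (simp add: mult_le_0_iff)
    then show "x = y" by simp
  qed
  then have inv: "invertible E"
    using matrix_left_invertible_injective invertible_left_inverse by blast
  define x where "x = matrix_inv E *v v"
  have Ex: "E *v x = v" unfolding x_def
    by (simp add: matrix_vector_mul_assoc matrix_inv_right[OF inv])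
  have q: "v \<bullet> x \<ge> (l/2) * (norm x)^2" using key[of x] Ex by (simp add: inner_commute)
  have nE: "norm E \<le> norm A + 1"
  proof -
    have "norm E \<le> norm A + norm (E - A)" by (metis add_diff_cancel_left' diff_add_cancel norm_triangle_ineq)
    then show ?thesis using close by linarith
  qed
  have "norm v \<le> C * norm E * norm x" using norm_mv[of E x] Ex unfolding C_def by simp
  also have "\<dots> \<le> C * (norm A + 1) * norm x"
    using nE Cpos by (intro mult_right_mono mult_left_mono) auto
  finally have nv: "norm v \<le> C * (norm A + 1) * norm x" .
  have D: "C * (norm A + 1) > 0" using Cpos by (simp add: add_nonneg_pos)
  have "(norm v)^2 \<le> (C * (norm A + 1) * norm x)^2" using nv by (intro power_mono) auto
  then have vv: "(norm v)^2 \<le> (norm x)^2 * (C * (norm A + 1))^2" by (simp add: power_mult_distrib mult.commute)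
  have D2: "(C * (norm A + 1))^2 > 0" by (rule zero_less_power[OF D])
  have "(norm v)^2 / (C * (norm A + 1))^2 \<le> (norm x)^2"
    using vv by (simp only: pos_divide_le_eq[OF D2])
  then have "(l/2) * ((norm v)^2 / (C * (norm A + 1))^2) \<le> (l/2) * (norm x)^2"
    using l by (intro mult_left_mono) auto
  then have "(l/2) * ((norm v)^2 / (C * (norm A + 1))^2) \<le> v \<bullet> x" using q by linarith
  moreover have "(l/2) / (C * (norm A + 1))^2 * (norm v)^2 = (l/2) * ((norm v)^2 / (C * (norm A + 1))^2)" by simp
  ultimately show ?thesis unfolding x_def by linarith
qed

lemma transfer_measure:
  assumes eq: "distr M S f = distr P S g" and f: "f \<in> measurable M S" and g: "g \<in> measurable P S"
    and h: "h \<in> borel_measurable S"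
  shows "measure M {\<omega>\<in>space M. (r::real) < h (f \<omega>)} = measure P {\<omega>\<in>space P. r < h (g \<omega>)}"
proof -
  let ?B = "{x\<in>space S. r < h x}"
  have "h -` {r<..} \<inter> space S \<in> sets S" using measurable_sets[OF h borel_open[OF open_greaterThan[of r]]] .
  moreover have "h -` {r<..} \<inter> space S = ?B" by auto
  ultimately have B: "?B \<in> sets S" by simp
  have 1: "f -` ?B \<inter> space M = {\<omega>\<in>space M. r < h (f \<omega>)}" using measurable_space[OF f] by auto
  have 2: "g -` ?B \<inter> space P = {\<omega>\<in>space P. r < h (g \<omega>)}" using measurable_space[OF g] by auto
  show ?thesis using measure_distr[OF f B] measure_distr[OF g B] eq 1 2 by simp
qed

lemma tight:
  fixes Y :: "nat \<Rightarrow> 'a \<Rightarrow> (real \<Rightarrow> real^'p) \<times> (real \<Rightarrow> real^'p)"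
    and L :: "'b \<Rightarrow> (real \<Rightarrow> real^'p) \<times> (real \<Rightarrow> real^'p)"
    and \<Phi> :: "(real \<Rightarrow> real^'p) \<times> (real \<Rightarrow> real^'p) \<Rightarrow> real^'p"
    and r :: "nat \<Rightarrow> real"
  assumes P: "prob_space P" and N: "prob_space N"
    and weak: "weak_conv_paths F A B P Y N L"
    and sc: "\<And>K. sup_cont A B (\<lambda>x. min 1 (max 0 (norm (\<Phi> x) - K)))"
    and mL: "(\<lambda>\<omega>. norm (\<Phi> (L \<omega>))) \<in> borel_measurable N"
    and mY: "\<And>m r. {\<omega>\<in>space P. r < norm (\<Phi> (Y m \<omega>))} \<in> sets P"
    and r: "filterlim r at_top F"
  shows "((\<lambda>m. measure P {\<omega>\<in>space P. r m < norm (\<Phi> (Y m \<omega>))}) \<longlongrightarrow> 0) F"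
proof (rule order_tendstoI)
  interpret P: prob_space P by (rule P)
  interpret N: prob_space N by (rule N)
  fix a :: real assume "a < 0"
  then show "\<forall>\<^sub>F m in F. a < measure P {\<omega>\<in>space P. r m < norm (\<Phi> (Y m \<omega>))}"
    by (intro always_eventually allI) (meson less_le_trans measure_nonneg)
next
  interpret P: prob_space P by (rule P)
  interpret N: prob_space N by (rule N)
  fix e :: real assume e: "e > 0"
  define AK where "AK = (\<lambda>k::nat. {\<omega>\<in>space N. real k < norm (\<Phi> (L \<omega>))})"
  have AKm: "AK k \<in> sets N" for k unfolding AK_def using mL by measurable
  have dec: "decseq AK" unfolding AK_def decseq_def by auto
  have inter: "(\<Inter>k. AK k) = {}"
  proof -
    have "\<omega> \<notin> AK (nat \<lceil>norm (\<Phi> (L \<omega>))\<rceil>)" for \<omega>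
      unfolding AK_def by (simp, linarith)
    then show ?thesis by blast
  qed
  have "(\<lambda>k. measure N (AK k)) \<longlonglongrightarrow> measure N (\<Inter>k. AK k)"
    by (rule N.finite_Lim_measure_decseq) (use AKm dec in auto)
  then have "(\<lambda>k. measure N (AK k)) \<longlonglongrightarrow> 0" using inter by simp
  then have "\<forall>\<^sub>F k in sequentially. measure N (AK k) < e/2" using e by (intro order_tendstoD) auto
  then obtain K where K: "measure N (AK K) < e/2" by (auto simp: eventually_sequentially)
  define g where "g = (\<lambda>x. min 1 (max 0 (norm (\<Phi> x) - real K)))"
  have gb: "bounded (range g)"
    unfolding bounded_iff g_def by (intro exI[of _ 1]) auto
  have gc: "sup_cont A B g" unfolding g_def by (rule sc)
  have lim: "((\<lambda>m. outer_exp P (\<lambda>\<omega>. g (Y m \<omega>))) \<longlongrightarrow> integral\<^sup>L N (\<lambda>\<omega>. g (L \<omega>))) F"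
    using weak gb gc unfolding weak_conv_paths_def by blast
  have mL'[measurable]: "(\<lambda>\<omega>. norm (\<Phi> (L \<omega>))) \<in> borel_measurable N" by (rule mL)
  have gLm: "(\<lambda>\<omega>. g (L \<omega>)) \<in> borel_measurable N" unfolding g_def
    by measurable
  have gLi: "integrable N (\<lambda>\<omega>. g (L \<omega>))"
    by (rule N.integrable_const_bound[where B=1]) (auto simp: g_def gLm)
  have "integral\<^sup>L N (\<lambda>\<omega>. g (L \<omega>)) \<le> integral\<^sup>L N (indicator (AK K))"
  proof (rule integral_mono)
    show "integrable N (indicator (AK K) :: 'b \<Rightarrow> real)"
      using AKm by (intro integrable_real_indicator) (auto simp: less_top[symmetric])
    fix \<omega> assume "\<omega> \<in> space N"
    then show "g (L \<omega>) \<le> indicator (AK K) \<omega>"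
      unfolding g_def AK_def indicator_def by auto
  qed (rule gLi)
  also have "\<dots> = measure N (AK K)" using AKm by simp
  finally have "integral\<^sup>L N (\<lambda>\<omega>. g (L \<omega>)) < e" using K e by linarith
  from order_tendstoD(2)[OF lim this] have ev1: "\<forall>\<^sub>F m in F. outer_exp P (\<lambda>\<omega>. g (Y m \<omega>)) < e" .
  have ev2: "\<forall>\<^sub>F m in F. real K + 1 \<le> r m"
    using r by (simp add: filterlim_at_top)
  show "\<forall>\<^sub>F m in F. measure P {\<omega>\<in>space P. r m < norm (\<Phi> (Y m \<omega>))} < e"
    using ev1 ev2
  proof eventually_elim
    case (elim m)
    let ?E = "{\<omega>\<in>space P. r m < norm (\<Phi> (Y m \<omega>))}"
    have Em: "?E \<in> sets P" by (rule mY)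
    let ?S = "{integral\<^sup>L P h | h. integrable P h \<and> (\<forall>\<omega>\<in>space P. g (Y m \<omega>) \<le> h \<omega>)}"
    have ne: "?S \<noteq> {}"
    proof -
      have "integrable P (\<lambda>_. 1::real)" by simp
      moreover have "\<forall>\<omega>\<in>space P. g (Y m \<omega>) \<le> 1" unfolding g_def by auto
      ultimately show ?thesis by blast
    qed
    have "measure P ?E \<le> Inf ?S"
    proof (rule cInf_greatest[OF ne])
      fix s assume "s \<in> ?S"
      then obtain h where h: "s = integral\<^sup>L P h" "integrable P h" "\<forall>\<omega>\<in>space P. g (Y m \<omega>) \<le> h \<omega>" by blast
      have "integral\<^sup>L P (indicator ?E) \<le> integral\<^sup>L P h"
      proof (rule integral_mono)
        show "integrable P (indicator ?E :: 'a \<Rightarrow> real)" using Em by (intro integrable_real_indicator) (auto simp: less_top[symmetric])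
        fix \<omega> assume w: "\<omega> \<in> space P"
        have "indicator ?E \<omega> \<le> g (Y m \<omega>)"
          using elim(2) w unfolding g_def indicator_def by auto
        then show "indicator ?E \<omega> \<le> h \<omega>" using h(3) w by fastforce
      qed (rule h(2))
      then show "measure P ?E \<le> s" using Em h(1) by simp
    qed
    then show ?case using elim(1) unfolding outer_exp_def by linarith
  qed
qed

lemma sum_shift_nat:
  fixes g :: "nat \<Rightarrow> 'b::comm_monoid_add" and a n :: nat
  shows "(\<Sum>t=a+1..a+n. g t) = (\<Sum>i<n. g (a+1+i))"
proof (induction n)
  case 0 then show ?case by simp
next
  case (Suc n)
  have "(\<Sum>t=a+1..a+Suc n. g t) = (\<Sum>t=a+1..a+n. g t) + g (a + Suc n)"
    by (simp add: sum.cl_ivl_Suc)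
  then show ?case using Suc by (simp add: add.commute add.left_commute)
qed

lemma sum_shift1:
  fixes g :: "nat \<Rightarrow> 'b::comm_monoid_add" and n :: nat
  shows "(\<Sum>t=1..n. g t) = (\<Sum>i<n. g (i+1))"
  using sum_shift_nat[of g 0 n] by (simp add: add.commute)

lemma sup_cont_fst:
  assumes "s \<in> A"
  shows "sup_cont A B (\<lambda>x::(real \<Rightarrow> real^'p) \<times> (real \<Rightarrow> real^'p). min 1 (max 0 (norm (fst x s) - K)))"
  unfolding sup_cont_def
proof (intro allI impI exI conjI)
  fix x :: "(real \<Rightarrow> real^'p) \<times> (real \<Rightarrow> real^'p)" and e :: real assume e: "e > 0"
  show "e > 0" by (rule e)
  fix y :: "(real \<Rightarrow> real^'p) \<times> (real \<Rightarrow> real^'p)"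
  assume h: "(\<forall>s\<in>A. dist (fst x s) (fst y s) < e) \<and> (\<forall>s\<in>B. dist (snd x s) (snd y s) < e)"
  then have "dist (fst x s) (fst y s) < e" using assms by blast
  then have "\<bar>norm (fst x s) - norm (fst y s)\<bar> < e"
    by (metis dist_norm le_less_trans norm_triangle_ineq3)
  then show "\<bar>min 1 (max 0 (norm (fst x s) - K)) - min 1 (max 0 (norm (fst y s) - K))\<bar> < e"
    by (simp add: abs_less_iff split: split_min split_max) linarith?
qed

lemma sup_cont_snd:
  assumes "s \<in> B"
  shows "sup_cont A B (\<lambda>x::(real \<Rightarrow> real^'p) \<times> (real \<Rightarrow> real^'p). min 1 (max 0 (norm (snd x s) - K)))"
  unfolding sup_cont_def
proof (intro allI impI exI conjI)
  fix x :: "(real \<Rightarrow> real^'p) \<times> (real \<Rightarrow> real^'p)" and e :: real assume e: "e > 0"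
  show "e > 0" by (rule e)
  fix y :: "(real \<Rightarrow> real^'p) \<times> (real \<Rightarrow> real^'p)"
  assume h: "(\<forall>s\<in>A. dist (fst x s) (fst y s) < e) \<and> (\<forall>s\<in>B. dist (snd x s) (snd y s) < e)"
  then have "dist (snd x s) (snd y s) < e" using assms by blast
  then have "\<bar>norm (snd x s) - norm (snd y s)\<bar> < e"
    by (metis dist_norm le_less_trans norm_triangle_ineq3)
  then show "\<bar>min 1 (max 0 (norm (snd x s) - K)) - min 1 (max 0 (norm (snd y s) - K))\<bar> < e"
    by (simp add: abs_less_iff split: split_min split_max) linarith?
qed

lemma cm_facts:
  assumes "1 < c"
  shows "real m \<le> real (nat \<lfloor>real m * c\<rfloor>)" "real (nat \<lfloor>real m * c\<rfloor>) \<le> real m * c"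
    "m \<le> nat \<lfloor>real m * c\<rfloor>"
proof -
  have "real m \<le> real m * c" using assms by (simp add: mult_le_cancel_left1)
  then have a: "int m \<le> \<lfloor>real m * c\<rfloor>" by (simp add: le_floor_iff)
  then show "m \<le> nat \<lfloor>real m * c\<rfloor>" by (metis nat_int nat_mono)
  then show "real m \<le> real (nat \<lfloor>real m * c\<rfloor>)" by simp
  have "0 \<le> \<lfloor>real m * c\<rfloor>" using a by linarith
  then show "real (nat \<lfloor>real m * c\<rfloor>) \<le> real m * c" by simp
qed

lemma Tm_fact:
  fixes T :: real and m :: nat
  assumes "T * real m \<in> \<nat>"
  shows "real (nat \<lfloor>T * real m\<rfloor>) = T * real m"
    "nat \<lfloor>real m * (T + 1)\<rfloor> = m + nat \<lfloor>T * real m\<rfloor>"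
proof -
  obtain n :: nat where n: "T * real m = real n" using assms by (auto elim: Nats_cases)
  have f: "\<lfloor>T * real m\<rfloor> = int n" unfolding n by (rule floor_of_nat)
  show "real (nat \<lfloor>T * real m\<rfloor>) = T * real m" unfolding f n by simp
  have "real m * (T + 1) = real (m + n)" using n by (simp add: algebra_simps)
  then have "\<lfloor>real m * (T + 1)\<rfloor> = int (m + n)" by (simp only: floor_of_nat)
  then show "nat \<lfloor>real m * (T + 1)\<rfloor> = m + nat \<lfloor>T * real m\<rfloor>" unfolding f by simp
qed

lemma phase_bound:
  fixes th a s :: "real^'p"
  assumes n: "1 \<le> n" and e: "0 \<le> e"
    and r: "\<not> (real n * norm (th - a - (1 / real n) *\<^sub>R s) > e * sqrt (real n))"
    and q: "\<not> (e < norm ((1 / real n) *\<^sub>R s))"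
  shows "norm (th - a) \<le> 2 * e"
proof -
  let ?R = "th - a - (1 / real n) *\<^sub>R s"
  have np: "real n \<ge> 1" using n by simp
  have s1: "1 \<le> sqrt (real n)" using np by simp
  then have "sqrt (real n) * 1 \<le> sqrt (real n) * sqrt (real n)" by (intro mult_left_mono) auto
  then have "sqrt (real n) \<le> real n" by simp
  then have "e * sqrt (real n) \<le> e * real n" using e by (intro mult_left_mono) auto
  then have "real n * norm ?R \<le> real n * e" using r by (simp add: mult.commute)
  then have R: "norm ?R \<le> e" using np by simp
  have "th - a = ?R + (1 / real n) *\<^sub>R s" by simp
  then have "norm (th - a) \<le> norm ?R + norm ((1 / real n) *\<^sub>R s)" by (metis norm_triangle_ineq)
  then show ?thesis using R q by linarith
qed

lemma detector_ge:
  assumes "j < k"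
  shows "(1 / real m ^ 3) * ((real (m + j))\<^sup>2 * (real (k - j))\<^sup>2 *
            ((theta_hat \<theta> x 1 (m + j) - theta_hat \<theta> x (m + j + 1) (m + k)) \<bullet>
             (matrix_inv Sig *v (theta_hat \<theta> x 1 (m + j) - theta_hat \<theta> x (m + j + 1) (m + k)))))
         \<le> detector \<theta> x Sig m k"
  unfolding detector_def using assms by (intro mult_left_mono Max_ge) auto

lemma Max_img_ge: "finite A \<Longrightarrow> a \<in> A \<Longrightarrow> (f a :: real) \<le> Max (f ` A)"
  by (simp add: Max_ge)

lemma scale_cmp:
  fixes s :: "real^'p"
  assumes "0 < n" "0 < q"
  shows "(e < norm ((1/n) *\<^sub>R s)) = (e * n / q < norm ((1/q) *\<^sub>R s))"
proof -
  have "(e < norm ((1/n) *\<^sub>R s)) = (e < norm s / n)" using assms by simp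
  also have "\<dots> = (e * n < norm s)" using assms by (simp add: pos_less_divide_eq)
  also have "\<dots> = (e * n / q < norm s / q)" using assms by (simp add: divide_less_cancel)
  also have "\<dots> = (e * n / q < norm ((1/q) *\<^sub>R s))" using assms by simp
  finally show ?thesis .
qed

lemma PiM_sum_meas:
  fixes G :: "'x::topological_space \<Rightarrow> real^'p"
  assumes G: "G \<in> borel_measurable borel"
  shows "(\<lambda>y. norm ((1 / real n) *\<^sub>R (\<Sum>i<n. G (y i)))) \<in> borel_measurable (PiM {..<n} (\<lambda>_. (borel :: 'x measure)))"
proof -
  have "(\<lambda>y. G (y i)) \<in> borel_measurable (PiM {..<n} (\<lambda>_. (borel :: 'x measure)))" if "i \<in> {..<n}" for i
    by (rule measurable_compose[OF measurable_component_singleton[OF that] G])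
  then have [measurable]: "(\<lambda>y. \<Sum>i<n. G (y i)) \<in> borel_measurable (PiM {..<n} (\<lambda>_. (borel :: 'x measure)))"
    by (intro borel_measurable_sum) auto
  show ?thesis by measurable
qed



theorem theorem3p8:
  fixes \<theta> :: "(real^'d \<Rightarrow> real) \<Rightarrow> real^'p"
    and T c \<alpha> :: real
    and M :: "'a measure" and X :: "nat \<Rightarrow> nat \<Rightarrow> 'a \<Rightarrow> real^'d"
    and P :: "'b measure" and Z1 Z2 :: "int \<Rightarrow> 'b \<Rightarrow> real^'d"
    and N :: "'c measure" and W1 W2 :: "real \<Rightarrow> 'c \<Rightarrow> real^'p"
    and Q :: "'e measure" and W :: "real \<Rightarrow> 'e \<Rightarrow> real^'p"
    and \<Sigma>1 \<Sigma>2 :: "real^'p^'p"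
    and est :: "nat \<Rightarrow> (nat \<Rightarrow> real^'d) \<Rightarrow> real^'p^'p"
    and w :: "real \<Rightarrow> real"
  defines "F1 \<equiv> cdf_of P (Z1 0)"
    and "F2 \<equiv> cdf_of P (Z2 0)"
    and "FT \<equiv> sequentially \<sqinter> principal {m. 0 < m \<and> T * real m \<in> \<nat>}"
    and "Tm \<equiv> (\<lambda>m::nat. nat \<lfloor>T * real m\<rfloor>)"
    and "cm \<equiv> (\<lambda>m::nat. nat \<lfloor>real m * c\<rfloor>)"
  assumes T_pos: "T > 0"
    and alpha: "0 < \<alpha>" "\<alpha> < 1"
    and c_range: "1 < c" "c < T + 1"
    and M_prob: "prob_space M"
    and X_meas: "\<And>m t. X m t \<in> borel_measurable M"
    and P_prob: "prob_space P"
    and stat1: "strictly_stationary P Z1"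
    and stat2: "strictly_stationary P Z2"
    and theta_ne: "\<theta> F1 \<noteq> \<theta> F2"
    and IF_meas1: "(\<lambda>x. infl_fun x F1 \<theta>) \<in> borel_measurable borel"
    and IF_meas2: "(\<lambda>x. infl_fun x F2 \<theta>) \<in> borel_measurable borel"
    and theta_hat_meas: "\<And>m i j. (\<lambda>\<omega>. theta_hat \<theta> (\<lambda>t. X m t \<omega>) i j) \<in> borel_measurable M"
    and law1: "\<And>m. 0 < m \<Longrightarrow> T * real m \<in> \<nat> \<Longrightarrow>
        distr M (PiM {..<cm m} (\<lambda>_. borel)) (\<lambda>\<omega>. \<lambda>i\<in>{..<cm m}. X m (i + 1) \<omega>) =
        distr P (PiM {..<cm m} (\<lambda>_. borel)) (\<lambda>\<omega>. \<lambda>i\<in>{..<cm m}. Z1 (int (i + 1)) \<omega>)"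
    and law2: "\<And>m. 0 < m \<Longrightarrow> T * real m \<in> \<nat> \<Longrightarrow>
        distr M (PiM {..<m + Tm m - cm m} (\<lambda>_. borel))
          (\<lambda>\<omega>. \<lambda>i\<in>{..<m + Tm m - cm m}. X m (cm m + 1 + i) \<omega>) =
        distr P (PiM {..<m + Tm m - cm m} (\<lambda>_. borel))
          (\<lambda>\<omega>. \<lambda>i\<in>{..<m + Tm m - cm m}. Z2 (int (cm m + 1 + i)) \<omega>)"
    and BM1: "std_BM N W1"
    and BM2: "std_BM N W2"
    and weak: "weak_conv_paths FT {0..c} {c..T+1} P
        (\<lambda>m \<omega>. ((\<lambda>s. (1 / sqrt (real m)) *\<^sub>R
                      (\<Sum>t=1..nat \<lfloor>real m * s\<rfloor>. infl_fun (Z1 (int t) \<omega>) F1 \<theta>)),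
                 (\<lambda>s. (1 / sqrt (real m)) *\<^sub>R
                      (\<Sum>t=cm m + 1..nat \<lfloor>real m * s\<rfloor>. infl_fun (Z2 (int t) \<omega>) F2 \<theta>))))
        N (\<lambda>\<omega>. ((\<lambda>s. mat_sqrt \<Sigma>1 *v W1 s \<omega>),
                 (\<lambda>s. mat_sqrt \<Sigma>2 *v (W2 s \<omega> - W2 c \<omega>))))"
    and Sigma1: "((\<lambda>t::int. cov_mat P (\<lambda>\<omega>. infl_fun (Z1 0 \<omega>) F1 \<theta>)
                                   (\<lambda>\<omega>. infl_fun (Z1 t \<omega>) F1 \<theta>)) has_sum \<Sigma>1) UNIV"
    and Sigma2: "((\<lambda>t::int. cov_mat P (\<lambda>\<omega>. infl_fun (Z2 0 \<omega>) F2 \<theta>)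
                                   (\<lambda>\<omega>. infl_fun (Z2 t \<omega>) F2 \<theta>)) has_sum \<Sigma>2) UNIV"
    and Sigma1_pd: "pos_def_mat \<Sigma>1"
    and Sigma2_pd: "pos_def_mat \<Sigma>2"
    and rem1: "\<And>\<epsilon>. \<epsilon> > 0 \<Longrightarrow>
        ((\<lambda>m. measure M {\<omega>\<in>space M. \<exists>i j. 1 \<le> i \<and> i < j \<and> j \<le> cm m \<and>
            real (j - i + 1) *
              norm (theta_hat \<theta> (\<lambda>t. X m t \<omega>) i j - \<theta> F1
                    - (1 / real (j - i + 1)) *\<^sub>R (\<Sum>t=i..j. infl_fun (X m t \<omega>) F1 \<theta>))
            > \<epsilon> * sqrt (real (cm m))}) \<longlongrightarrow> 0) FT"
    and rem2: "\<And>\<epsilon>. \<epsilon> > 0 \<Longrightarrow>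
        ((\<lambda>m. measure M {\<omega>\<in>space M. \<exists>i j. cm m + 1 \<le> i \<and> i < j \<and> j \<le> m + Tm m \<and>
            real (j - i + 1) *
              norm (theta_hat \<theta> (\<lambda>t. X m t \<omega>) i j - \<theta> F2
                    - (1 / real (j - i + 1)) *\<^sub>R (\<Sum>t=i..j. infl_fun (X m t \<omega>) F2 \<theta>))
            > \<epsilon> * sqrt (real (m + Tm m - cm m))}) \<longlongrightarrow> 0) FT"
    and est_meas: "\<And>m. est m \<in> borel_measurable (PiM {1..m} (\<lambda>_. borel))"
    and est_consistent: "\<And>\<epsilon>. \<epsilon> > 0 \<Longrightarrow>
        ((\<lambda>m. measure M {\<omega>\<in>space M.
            norm (est m (\<lambda>t\<in>{1..m}. X m t \<omega>) - \<Sigma>1) > \<epsilon>}) \<longlongrightarrow> 0) FT"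
    and w_pos: "\<And>x. x \<in> {0..T} \<Longrightarrow> w x > 0"
    and w_mono: "mono_on {0..T} w"
    and BM: "std_BM Q W"
    and w_level: "measure Q {\<omega>\<in>space Q.
        (SUP t\<in>{1..T+1}. SUP s\<in>{1..t}.
           ereal ((t *\<^sub>R W s \<omega> - s *\<^sub>R W t \<omega>) \<bullet> (t *\<^sub>R W s \<omega> - s *\<^sub>R W t \<omega>) / w (t - 1))) > 1}
        = \<alpha>"
  shows "((\<lambda>m. measure M {\<omega>\<in>space M.
            Max ((\<lambda>k. detector \<theta> (\<lambda>t. X m t \<omega>) (est m (\<lambda>t\<in>{1..m}. X m t \<omega>)) m k
                        / w (real k / real m)) ` {1..Tm m}) > 1}) \<longlongrightarrow> 1) FT"
proof -
  interpret M: prob_space M by (rule M_prob)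
  interpret P: prob_space P by (rule P_prob)
  have N_prob: "prob_space N" using BM1 unfolding std_BM_def by blast
  have FT_le: "FT \<le> sequentially" unfolding FT_def by (rule inf_le1)
  have evFT: "eventually Q FT" if "eventually (\<lambda>m. 0 < m \<and> T * real m \<in> \<nat> \<longrightarrow> Q m) sequentially" for Q
    using that unfolding FT_def eventually_inf_principal by simp
  define c' where "c' = T + 1 - c"
  have c'pos: "c' > 0" using c_range unfolding c'_def by simp
  have cmf: "real m \<le> real (cm m)" "real (cm m) \<le> real m * c" "m \<le> cm m" for m
    unfolding cm_def using cm_facts[OF c_range(1)] by auto
  have Tmf: "real (Tm m) = T * real m" "nat \<lfloor>real m * (T + 1)\<rfloor> = m + Tm m" if "T * real m \<in> \<nat>" for m
    unfolding Tm_def using Tm_fact[OF that] by auto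
  define L where "L = (\<lambda>m. m + Tm m - cm m)"
  have Lf: "cm m \<le> m + Tm m" "real (L m) = real m + T * real m - real (cm m)" "real m * c' \<le> real (L m)"
    if "T * real m \<in> \<nat>" for m
  proof -
    have "real (cm m) \<le> real m * c" by (rule cmf)
    also have "\<dots> \<le> real m * (T + 1)" using c_range by (intro mult_left_mono) auto
    also have "\<dots> = real (m + Tm m)" using Tmf(1)[OF that] by (simp add: algebra_simps)
    finally show le: "cm m \<le> m + Tm m" by simp
    show eq: "real (L m) = real m + T * real m - real (cm m)"
      unfolding L_def using le Tmf(1)[OF that] by (simp add: of_nat_diff)
    show "real m * c' \<le> real (L m)" unfolding eq c'_def using cmf(2)[of m] by (simp add: algebra_simps)
  qed
  define d where "d = norm (\<theta> F1 - \<theta> F2)"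
  have dpos: "d > 0" using theta_ne unfolding d_def by simp
  define e1 where "e1 = d / 8"
  have e1pos: "e1 > 0" using dpos unfolding e1_def by simp
  obtain l where lpos: "l > 0" and lA: "\<And>u. l * (norm u)^2 \<le> u \<bullet> (\<Sigma>1 *v u)"
    using pd_lower[OF Sigma1_pd] by blast
  define Cp where "Cp = real CARD('p) * real CARD('p)"
  have Cppos: "Cp > 0" unfolding Cp_def by simp
  define \<eta> where "\<eta> = min 1 (l / (2 * Cp))"
  have etapos: "\<eta> > 0" unfolding \<eta>_def using lpos Cppos by simp
  define \<kappa> where "\<kappa> = (l/2) / (Cp * (norm \<Sigma>1 + 1))^2"
  have kpos: "\<kappa> > 0"
  proof -
    have "Cp * (norm \<Sigma>1 + 1) > 0" using Cppos by (simp add: add_nonneg_pos)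
    then have "(Cp * (norm \<Sigma>1 + 1))^2 > 0" by (rule zero_less_power)
    then show ?thesis unfolding \<kappa>_def using lpos by (intro divide_pos_pos) auto
  qed

  define R1 where "R1 = (\<lambda>m. {\<omega>\<in>space M. \<exists>i j. 1 \<le> i \<and> i < j \<and> j \<le> cm m \<and>
            real (j - i + 1) *
              norm (theta_hat \<theta> (\<lambda>t. X m t \<omega>) i j - \<theta> F1
                    - (1 / real (j - i + 1)) *\<^sub>R (\<Sum>t=i..j. infl_fun (X m t \<omega>) F1 \<theta>))
            > e1 * sqrt (real (cm m))})"
  define R2 where "R2 = (\<lambda>m. {\<omega>\<in>space M. \<exists>i j. cm m + 1 \<le> i \<and> i < j \<and> j \<le> m + Tm m \<and>
            real (j - i + 1) *
              norm (theta_hat \<theta> (\<lambda>t. X m t \<omega>) i j - \<theta> F2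
                    - (1 / real (j - i + 1)) *\<^sub>R (\<Sum>t=i..j. infl_fun (X m t \<omega>) F2 \<theta>))
            > e1 * sqrt (real (m + Tm m - cm m))})"
  define A1 where "A1 = (\<lambda>m. {\<omega>\<in>space M. e1 < norm ((1 / real (cm m)) *\<^sub>R (\<Sum>t=1..cm m. infl_fun (X m t \<omega>) F1 \<theta>))})"
  define A2 where "A2 = (\<lambda>m. {\<omega>\<in>space M. e1 < norm ((1 / real (L m)) *\<^sub>R (\<Sum>t=cm m + 1..m + Tm m. infl_fun (X m t \<omega>) F2 \<theta>))})"
  define SE where "SE = (\<lambda>m. {\<omega>\<in>space M. norm (est m (\<lambda>t\<in>{1..m}. X m t \<omega>) - \<Sigma>1) > \<eta>})"
  define G where "G = (\<lambda>m. {\<omega>\<in>space M.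
            Max ((\<lambda>k. detector \<theta> (\<lambda>t. X m t \<omega>) (est m (\<lambda>t\<in>{1..m}. X m t \<omega>)) m k
                        / w (real k / real m)) ` {1..Tm m}) > 1})"
  define U where "U = (\<lambda>m. R1 m \<union> R2 m \<union> A1 m \<union> A2 m \<union> SE m)"

  have limR1: "((\<lambda>m. measure M (R1 m)) \<longlongrightarrow> 0) FT" unfolding R1_def by (rule rem1[OF e1pos])
  have limR2: "((\<lambda>m. measure M (R2 m)) \<longlongrightarrow> 0) FT" unfolding R2_def by (rule rem2[OF e1pos])
  have limSE: "((\<lambda>m. measure M (SE m)) \<longlongrightarrow> 0) FT" unfolding SE_def by (rule est_consistent[OF etapos])
  have Zm1: "Z1 t \<in> borel_measurable P" for t using stat1 unfolding strictly_stationary_def by blast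
  have Zm2: "Z2 t \<in> borel_measurable P" for t using stat2 unfolding strictly_stationary_def by blast
  have IFZ1[measurable]: "(\<lambda>\<omega>. infl_fun (Z1 t \<omega>) F1 \<theta>) \<in> borel_measurable P" for t
    by (rule measurable_compose[OF Zm1 IF_meas1])
  have IFZ2[measurable]: "(\<lambda>\<omega>. infl_fun (Z2 t \<omega>) F2 \<theta>) \<in> borel_measurable P" for t
    by (rule measurable_compose[OF Zm2 IF_meas2])
  define Y where "Y = (\<lambda>m \<omega>. ((\<lambda>s. (1 / sqrt (real m)) *\<^sub>R
                      (\<Sum>t=1..nat \<lfloor>real m * s\<rfloor>. infl_fun (Z1 (int t) \<omega>) F1 \<theta>)),
                 (\<lambda>s. (1 / sqrt (real m)) *\<^sub>R
                      (\<Sum>t=cm m + 1..nat \<lfloor>real m * s\<rfloor>. infl_fun (Z2 (int t) \<omega>) F2 \<theta>))))"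
  define Lim where "Lim = (\<lambda>\<omega>. ((\<lambda>s. mat_sqrt \<Sigma>1 *v W1 s \<omega>),
                 (\<lambda>s. mat_sqrt \<Sigma>2 *v (W2 s \<omega> - W2 c \<omega>))))"
  have weak': "weak_conv_paths FT {0..c} {c..T+1} P Y N Lim" using weak unfolding Y_def Lim_def .
  have W1m: "W1 t \<in> borel_measurable N" for t using BM1 unfolding std_BM_def by blast
  have W2m: "W2 t \<in> borel_measurable N" for t using BM2 unfolding std_BM_def by blast
  have linm: "(\<lambda>\<omega>. A *v f \<omega>) \<in> borel_measurable N" if "f \<in> borel_measurable N" for A :: "real^'p^'p" and f
    using borel_measurable_continuous_on[OF linear_continuous_on[OF matrix_vector_mul_bounded_linear[of A]] that] .
  have sqrt_lim: "filterlim (\<lambda>m. e * sqrt (real m)) at_top FT" if "e > 0" for e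
  proof -
    have "filterlim (\<lambda>m. e * sqrt (real m)) at_top sequentially"
      by (rule filterlim_tendsto_pos_mult_at_top[OF tendsto_const that filterlim_compose[OF sqrt_at_top filterlim_real_sequentially]])
    then show ?thesis using filterlim_mono[OF _ order_refl FT_le] by blast
  qed

  define r1 where "r1 = (\<lambda>m. e1 * real (cm m) / sqrt (real m))"
  have tA1: "((\<lambda>m. measure P {\<omega>\<in>space P. r1 m < norm (fst (Y m \<omega>) c)}) \<longlongrightarrow> 0) FT"
  proof (rule tight[OF P_prob N_prob weak'])
    show "sup_cont {0..c} {c..T+1} (\<lambda>x. min 1 (max 0 (norm (fst x c) - K)))" for K
      by (rule sup_cont_fst) (use c_range in auto)
    have "(\<lambda>\<omega>. mat_sqrt \<Sigma>1 *v W1 c \<omega>) \<in> borel_measurable N" by (rule linm[OF W1m])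
    from measurable_compose[OF this borel_measurable_norm]
    show "(\<lambda>\<omega>. norm (fst (Lim \<omega>) c)) \<in> borel_measurable N" unfolding Lim_def by simp
    show "{\<omega>\<in>space P. r < norm (fst (Y m \<omega>) c)} \<in> sets P" for m r unfolding Y_def prod.sel by measurable
    have "\<forall>\<^sub>F m in FT. e1 * sqrt (real m) \<le> r1 m"
    proof (rule evFT, rule always_eventually, intro allI impI)
      fix m :: nat assume "0 < m \<and> T * real m \<in> \<nat>"
      then have mp: "0 < real m" by simp
      have rd: "real m / sqrt (real m) = sqrt (real m)" by (rule real_div_sqrt) simp
      have "e1 * sqrt (real m) = e1 * real m / sqrt (real m)" unfolding times_divide_eq_right[symmetric] rd ..
      also have "\<dots> \<le> e1 * real (cm m) / sqrt (real m)"
        using cmf(1)[of m] e1pos mp by (intro divide_right_mono mult_left_mono) auto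
      finally show "e1 * sqrt (real m) \<le> r1 m" unfolding r1_def .
    qed
    then show "filterlim r1 at_top FT" by (rule filterlim_at_top_mono[OF sqrt_lim[OF e1pos]])
  qed
  have limA1: "((\<lambda>m. measure M (A1 m)) \<longlongrightarrow> 0) FT"
  proof (rule Lim_transform_eventually[OF tA1])
    show "\<forall>\<^sub>F m in FT. measure P {\<omega>\<in>space P. r1 m < norm (fst (Y m \<omega>) c)} = measure M (A1 m)"
    proof (rule evFT, rule always_eventually, intro allI impI)
      fix m :: nat assume mT: "0 < m \<and> T * real m \<in> \<nat>"
      then have mp: "0 < real m" by simp
      have cp: "0 < real (cm m)" using cmf(1)[of m] mp by linarith
      define h where "h = (\<lambda>y. norm ((1 / real (cm m)) *\<^sub>R (\<Sum>i<cm m. infl_fun (y i) F1 \<theta>)))"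
      have hm: "h \<in> borel_measurable (PiM {..<cm m} (\<lambda>_. borel))" unfolding h_def by (rule PiM_sum_meas[OF IF_meas1])
      have fm: "(\<lambda>\<omega>. \<lambda>i\<in>{..<cm m}. X m (i + 1) \<omega>) \<in> measurable M (PiM {..<cm m} (\<lambda>_. borel))"
        by (rule measurable_restrict) (rule X_meas)
      have gm: "(\<lambda>\<omega>. \<lambda>i\<in>{..<cm m}. Z1 (int (i + 1)) \<omega>) \<in> measurable P (PiM {..<cm m} (\<lambda>_. borel))"
        by (rule measurable_restrict) (rule Zm1)
      have tr: "measure M {\<omega>\<in>space M. e1 < h (\<lambda>i\<in>{..<cm m}. X m (i + 1) \<omega>)} =
                measure P {\<omega>\<in>space P. e1 < h (\<lambda>i\<in>{..<cm m}. Z1 (int (i + 1)) \<omega>)}"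
        by (rule transfer_measure[OF law1[OF _ _] fm gm hm]) (use mT in auto)
      have "A1 m = {\<omega>\<in>space M. e1 < h (\<lambda>i\<in>{..<cm m}. X m (i + 1) \<omega>)}"
        unfolding A1_def h_def sum_shift1[of _ "cm m"] by (auto intro!: sum.cong)
      moreover have "{\<omega>\<in>space P. e1 < h (\<lambda>i\<in>{..<cm m}. Z1 (int (i + 1)) \<omega>)} =
          {\<omega>\<in>space P. r1 m < norm (fst (Y m \<omega>) c)}"
      proof -
        have "(\<Sum>i<cm m. infl_fun ((\<lambda>i\<in>{..<cm m}. Z1 (int (i + 1)) \<omega>) i) F1 \<theta>) =
              (\<Sum>t=1..cm m. infl_fun (Z1 (int t) \<omega>) F1 \<theta>)" for \<omega>
          unfolding sum_shift1[of _ "cm m"] by (auto intro!: sum.cong)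
        moreover have "fst (Y m \<omega>) c = (1 / sqrt (real m)) *\<^sub>R (\<Sum>t=1..cm m. infl_fun (Z1 (int t) \<omega>) F1 \<theta>)" for \<omega>
          unfolding Y_def cm_def by simp
        ultimately show ?thesis unfolding h_def r1_def using scale_cmp[OF cp, of "sqrt (real m)"] mp by auto
      qed
      ultimately show "measure P {\<omega>\<in>space P. r1 m < norm (fst (Y m \<omega>) c)} = measure M (A1 m)" using tr by simp
    qed
  qed

  define r2 where "r2 = (\<lambda>m. e1 * real (L m) / sqrt (real m))"
  have tA2: "((\<lambda>m. measure P {\<omega>\<in>space P. r2 m < norm (snd (Y m \<omega>) (T + 1))}) \<longlongrightarrow> 0) FT"
  proof (rule tight[OF P_prob N_prob weak'])
    show "sup_cont {0..c} {c..T+1} (\<lambda>x. min 1 (max 0 (norm (snd x (T + 1)) - K)))" for K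
      by (rule sup_cont_snd) (use c_range in auto)
    have "(\<lambda>\<omega>. mat_sqrt \<Sigma>2 *v (W2 (T + 1) \<omega> - W2 c \<omega>)) \<in> borel_measurable N"
      by (rule linm) (use W2m in measurable)
    from measurable_compose[OF this borel_measurable_norm]
    show "(\<lambda>\<omega>. norm (snd (Lim \<omega>) (T + 1))) \<in> borel_measurable N" unfolding Lim_def by simp
    show "{\<omega>\<in>space P. r < norm (snd (Y m \<omega>) (T + 1))} \<in> sets P" for m r unfolding Y_def prod.sel by measurable
    have "\<forall>\<^sub>F m in FT. e1 * c' * sqrt (real m) \<le> r2 m"
    proof (rule evFT, rule always_eventually, intro allI impI)
      fix m :: nat assume mT: "0 < m \<and> T * real m \<in> \<nat>"
      then have mp: "0 < real m" by simp
      have rd: "real m / sqrt (real m) = sqrt (real m)" by (rule real_div_sqrt) simp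
      have "e1 * (real m * c') / sqrt (real m) = e1 * c' * (real m / sqrt (real m))" by (simp add: field_simps)
      then have "e1 * c' * sqrt (real m) = e1 * (real m * c') / sqrt (real m)" unfolding rd ..
      also have "\<dots> \<le> e1 * real (L m) / sqrt (real m)"
        using Lf(3)[of m] mT e1pos mp by (intro divide_right_mono mult_left_mono) auto
      finally show "e1 * c' * sqrt (real m) \<le> r2 m" unfolding r2_def .
    qed
    moreover have "filterlim (\<lambda>m. e1 * c' * sqrt (real m)) at_top FT" using sqrt_lim[of "e1 * c'"] e1pos c'pos by simp
    ultimately show "filterlim r2 at_top FT" using filterlim_at_top_mono by blast
  qed
  have limA2: "((\<lambda>m. measure M (A2 m)) \<longlongrightarrow> 0) FT"
  proof (rule Lim_transform_eventually[OF tA2])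
    obtain n1 :: nat where n1: "1 / c' < real n1" using reals_Archimedean2 by blast
    show "\<forall>\<^sub>F m in FT. measure P {\<omega>\<in>space P. r2 m < norm (snd (Y m \<omega>) (T + 1))} = measure M (A2 m)"
    proof (rule evFT, unfold eventually_sequentially, intro exI allI impI)
      fix m :: nat assume mn: "n1 \<le> m" and mT: "0 < m \<and> T * real m \<in> \<nat>"
      have TN: "T * real m \<in> \<nat>" using mT by simp
      then have mp: "0 < real m" using mT by simp
      have "real n1 \<le> real m" using mn by simp
      then have "c' * real n1 \<le> c' * real m" using c'pos by (intro mult_left_mono) auto
      moreover have "1 < c' * real n1" using n1 c'pos by (simp add: pos_divide_less_eq mult.commute)
      ultimately have "1 < real m * c'" by (simp add: mult.commute)
      then have Lp: "0 < real (L m)" using Lf(3)[OF TN] by linarith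
      have le: "cm m \<le> m + Tm m" by (rule Lf(1)[OF TN])
      define n where "n = m + Tm m - cm m"
      have nL: "n = L m" unfolding n_def L_def ..
      have top: "m + Tm m = cm m + n" unfolding n_def using le by simp
      define h where "h = (\<lambda>y. norm ((1 / real n) *\<^sub>R (\<Sum>i<n. infl_fun (y i) F2 \<theta>)))"
      have hm: "h \<in> borel_measurable (PiM {..<n} (\<lambda>_. borel))" unfolding h_def by (rule PiM_sum_meas[OF IF_meas2])
      have fm: "(\<lambda>\<omega>. \<lambda>i\<in>{..<m + Tm m - cm m}. X m (cm m + 1 + i) \<omega>) \<in> measurable M (PiM {..<m + Tm m - cm m} (\<lambda>_. borel))"
        by (rule measurable_restrict) (rule X_meas)
      have gm: "(\<lambda>\<omega>. \<lambda>i\<in>{..<m + Tm m - cm m}. Z2 (int (cm m + 1 + i)) \<omega>) \<in> measurable P (PiM {..<m + Tm m - cm m} (\<lambda>_. borel))"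
        by (rule measurable_restrict) (rule Zm2)
      have tr: "measure M {\<omega>\<in>space M. e1 < h (\<lambda>i\<in>{..<m + Tm m - cm m}. X m (cm m + 1 + i) \<omega>)} =
                measure P {\<omega>\<in>space P. e1 < h (\<lambda>i\<in>{..<m + Tm m - cm m}. Z2 (int (cm m + 1 + i)) \<omega>)}"
        using hm unfolding n_def by (intro transfer_measure[OF law2[OF _ _] fm gm]) (use mT in auto)
      have "A2 m = {\<omega>\<in>space M. e1 < h (\<lambda>i\<in>{..<m + Tm m - cm m}. X m (cm m + 1 + i) \<omega>)}"
        unfolding A2_def h_def top nL[symmetric] unfolding n_def[symmetric] sum_shift_nat[of _ "cm m" n]
        by (auto intro!: sum.cong)
      moreover have "{\<omega>\<in>space P. e1 < h (\<lambda>i\<in>{..<m + Tm m - cm m}. Z2 (int (cm m + 1 + i)) \<omega>)} =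
          {\<omega>\<in>space P. r2 m < norm (snd (Y m \<omega>) (T + 1))}"
      proof -
        have "(\<Sum>i<n. infl_fun ((\<lambda>i\<in>{..<m + Tm m - cm m}. Z2 (int (cm m + 1 + i)) \<omega>) i) F2 \<theta>) =
              (\<Sum>t=cm m + 1..cm m + n. infl_fun (Z2 (int t) \<omega>) F2 \<theta>)" for \<omega>
          unfolding sum_shift_nat[of _ "cm m" n] n_def[symmetric] by (auto intro!: sum.cong)
        moreover have "snd (Y m \<omega>) (T + 1) = (1 / sqrt (real m)) *\<^sub>R (\<Sum>t=cm m + 1..cm m + n. infl_fun (Z2 (int t) \<omega>) F2 \<theta>)" for \<omega>
          unfolding Y_def using Tmf(2)[OF TN] top by simp
        ultimately show ?thesis unfolding h_def r2_def nL[symmetric] using scale_cmp[of "real n" "sqrt (real m)"] Lp mp nL by auto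
      qed
      ultimately show "measure P {\<omega>\<in>space P. r2 m < norm (snd (Y m \<omega>) (T + 1))} = measure M (A2 m)" using tr by simp
    qed
  qed

  have Xm[measurable]: "\<And>m t. X m t \<in> borel_measurable M" by (rule X_meas)
  have IF1X[measurable]: "(\<lambda>\<omega>. infl_fun (X m t \<omega>) F1 \<theta>) \<in> borel_measurable M" for m t
    by (rule measurable_compose[OF X_meas IF_meas1])
  have IF2X[measurable]: "(\<lambda>\<omega>. infl_fun (X m t \<omega>) F2 \<theta>) \<in> borel_measurable M" for m t
    by (rule measurable_compose[OF X_meas IF_meas2])
  have thhm[measurable]: "(\<lambda>\<omega>. theta_hat \<theta> (\<lambda>t. X m t \<omega>) i j) \<in> borel_measurable M" for m i j
    by (rule theta_hat_meas)
  have Em[measurable]: "(\<lambda>\<omega>. est m (\<lambda>t\<in>{1..m}. X m t \<omega>)) \<in> borel_measurable M" for m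
    by (rule measurable_compose[OF measurable_restrict est_meas]) (rule X_meas)
  have R1m: "R1 m \<in> sets M" for m unfolding R1_def by measurable
  have R2m: "R2 m \<in> sets M" for m unfolding R2_def by measurable
  have A1m: "A1 m \<in> sets M" for m unfolding A1_def by measurable
  have A2m: "A2 m \<in> sets M" for m unfolding A2_def by measurable
  have SEm: "SE m \<in> sets M" for m unfolding SE_def by measurable
  have detm: "(\<lambda>\<omega>. detector \<theta> (\<lambda>t. X m t \<omega>) (est m (\<lambda>t\<in>{1..m}. X m t \<omega>)) m k) \<in> borel_measurable M" for m k
  proof -
    have "(\<lambda>\<omega>. (theta_hat \<theta> (\<lambda>t. X m t \<omega>) 1 (m + j) - theta_hat \<theta> (\<lambda>t. X m t \<omega>) (m + j + 1) (m + k)) \<bullet>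
             (matrix_inv (est m (\<lambda>t\<in>{1..m}. X m t \<omega>)) *v (theta_hat \<theta> (\<lambda>t. X m t \<omega>) 1 (m + j) - theta_hat \<theta> (\<lambda>t. X m t \<omega>) (m + j + 1) (m + k))))
          \<in> borel_measurable M" for j
      by (rule quad_inv_meas[OF Em]) measurable
    then show ?thesis unfolding detector_def
      by (intro borel_measurable_times borel_measurable_const borel_measurable_Max finite_atLeastLessThan) auto
  qed
  have Gm: "G m \<in> sets M" for m
  proof -
    have [measurable]: "(\<lambda>\<omega>. Max ((\<lambda>k. detector \<theta> (\<lambda>t. X m t \<omega>) (est m (\<lambda>t\<in>{1..m}. X m t \<omega>)) m k
                        / w (real k / real m)) ` {1..Tm m})) \<in> borel_measurable M"
      by (intro borel_measurable_Max finite_atLeastAtMost borel_measurable_divide detm borel_measurable_const)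
    show ?thesis unfolding G_def by measurable
  qed
  have Um: "U m \<in> sets M" for m unfolding U_def using R1m R2m A1m A2m SEm by auto

  have core: "eventually (\<lambda>m. space M - U m \<subseteq> G m) FT"
  proof -
    define K0 where "K0 = c'^2 * (\<kappa> * d^2 / 4)"
    have K0pos: "K0 > 0" unfolding K0_def using c'pos kpos dpos by simp
    obtain n0 :: nat where n0: "max 2 (max (2 / c') (w T / K0)) < real n0"
      using reals_Archimedean2 by blast
    show ?thesis
    proof (rule evFT)
      show "eventually (\<lambda>m. 0 < m \<and> T * real m \<in> \<nat> \<longrightarrow> space M - U m \<subseteq> G m) sequentially"
        unfolding eventually_sequentially
      proof (intro exI allI impI subsetI)
        fix m \<omega> assume mn: "n0 \<le> m" and mT: "0 < m \<and> T * real m \<in> \<nat>" and w: "\<omega> \<in> space M - U m"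
        have TN: "T * real m \<in> \<nat>" using mT by simp
        have mr: "real n0 \<le> real m" using mn by simp
        have m2: "2 < real m" using n0 mr by linarith
        have mc': "2 / c' < real m" using n0 mr by linarith
        have mK: "w T / K0 < real m" using n0 mr by linarith
        have c2: "2 \<le> cm m" using cmf(1)[of m] m2 by linarith
        have L2r: "2 < real (L m)"
        proof -
          have "2 < real m * c'" using mc' c'pos by (simp add: pos_divide_less_eq mult.commute)
          then show ?thesis using Lf(3)[OF TN] by linarith
        qed
        have L2: "2 \<le> L m" using L2r by linarith
        have le: "cm m \<le> m + Tm m" by (rule Lf(1)[OF TN])
        have wsp: "\<omega> \<in> space M" using w by blast
        let ?xs = "\<lambda>t. X m t \<omega>"
        let ?E = "est m (\<lambda>t\<in>{1..m}. X m t \<omega>)"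
        let ?h1 = "theta_hat \<theta> ?xs 1 (cm m)"
        let ?h2 = "theta_hat \<theta> ?xs (cm m + 1) (m + Tm m)"
        have nU: "\<omega> \<notin> R1 m" "\<omega> \<notin> R2 m" "\<omega> \<notin> A1 m" "\<omega> \<notin> A2 m" "\<omega> \<notin> SE m"
          using w unfolding U_def by auto
        have e: "cm m - 1 + 1 = cm m" using c2 by simp
        have r1: "\<not> (real (cm m) *
              norm (?h1 - \<theta> F1 - (1 / real (cm m)) *\<^sub>R (\<Sum>t=1..cm m. infl_fun (X m t \<omega>) F1 \<theta>))
            > e1 * sqrt (real (cm m)))"
        proof
          assume a: "real (cm m) *
              norm (?h1 - \<theta> F1 - (1 / real (cm m)) *\<^sub>R (\<Sum>t=1..cm m. infl_fun (X m t \<omega>) F1 \<theta>))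
            > e1 * sqrt (real (cm m))"
          have "\<omega> \<in> R1 m" unfolding R1_def mem_Collect_eq
          proof (rule conjI[OF wsp], rule exI[of _ 1], rule exI[of _ "cm m"], intro conjI)
            show "(1::nat) \<le> 1" by simp
            show "1 < cm m" using c2 by simp
            show "cm m \<le> cm m" by simp
            show "real (cm m - 1 + 1) *
              norm (theta_hat \<theta> (\<lambda>t. X m t \<omega>) 1 (cm m) - \<theta> F1
                    - (1 / real (cm m - 1 + 1)) *\<^sub>R (\<Sum>t=1..cm m. infl_fun (X m t \<omega>) F1 \<theta>))
            > e1 * sqrt (real (cm m))" unfolding e by (rule a)
          qed
          then show False using nU(1) by blast
        qed
        have q1: "\<not> (e1 < norm ((1 / real (cm m)) *\<^sub>R (\<Sum>t=1..cm m. infl_fun (X m t \<omega>) F1 \<theta>)))"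
          using nU(3) wsp unfolding A1_def by blast
        have b1: "norm (?h1 - \<theta> F1) \<le> 2 * e1"
          by (rule phase_bound[OF _ _ r1 q1]) (use c2 e1pos in auto)
        have lt2: "cm m + 1 < m + Tm m" using L2 unfolding L_def by linarith
        have e2: "m + Tm m - (cm m + 1) + 1 = L m" unfolding L_def using lt2 by simp
        have e2': "m + Tm m - cm m = L m" unfolding L_def by simp
        have r2: "\<not> (real (L m) *
              norm (?h2 - \<theta> F2 - (1 / real (L m)) *\<^sub>R (\<Sum>t=cm m + 1..m + Tm m. infl_fun (X m t \<omega>) F2 \<theta>))
            > e1 * sqrt (real (L m)))"
        proof
          assume a: "real (L m) *
              norm (?h2 - \<theta> F2 - (1 / real (L m)) *\<^sub>R (\<Sum>t=cm m + 1..m + Tm m. infl_fun (X m t \<omega>) F2 \<theta>))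
            > e1 * sqrt (real (L m))"
          have "\<omega> \<in> R2 m" unfolding R2_def mem_Collect_eq
          proof (rule conjI[OF wsp], rule exI[of _ "cm m + 1"], rule exI[of _ "m + Tm m"], intro conjI)
            show "cm m + 1 \<le> cm m + 1" by simp
            show "cm m + 1 < m + Tm m" by (rule lt2)
            show "m + Tm m \<le> m + Tm m" by simp
            show "real (m + Tm m - (cm m + 1) + 1) *
              norm (theta_hat \<theta> (\<lambda>t. X m t \<omega>) (cm m + 1) (m + Tm m) - \<theta> F2
                    - (1 / real (m + Tm m - (cm m + 1) + 1)) *\<^sub>R (\<Sum>t=cm m + 1..m + Tm m. infl_fun (X m t \<omega>) F2 \<theta>))
            > e1 * sqrt (real (m + Tm m - cm m))" unfolding e2 e2' by (rule a)
          qed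
          then show False using nU(2) by blast
        qed
        have q2: "\<not> (e1 < norm ((1 / real (L m)) *\<^sub>R (\<Sum>t=cm m + 1..m + Tm m. infl_fun (X m t \<omega>) F2 \<theta>)))"
          using nU(4) wsp unfolding A2_def by blast
        have b2: "norm (?h2 - \<theta> F2) \<le> 2 * e1"
          by (rule phase_bound[OF _ _ r2 q2]) (use L2 e1pos in auto)
        let ?D = "?h1 - ?h2"
        have "\<theta> F1 - \<theta> F2 = ?D - (?h1 - \<theta> F1) + (?h2 - \<theta> F2)" by (simp add: algebra_simps)
        then have "d = norm (?D - (?h1 - \<theta> F1) + (?h2 - \<theta> F2))" unfolding d_def by simp
        also have "\<dots> \<le> norm (?D - (?h1 - \<theta> F1)) + norm (?h2 - \<theta> F2)" by (rule norm_triangle_ineq)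
        also have "norm (?D - (?h1 - \<theta> F1)) \<le> norm ?D + norm (?h1 - \<theta> F1)" by (rule norm_triangle_ineq4)
        finally have "d \<le> norm ?D + norm (?h1 - \<theta> F1) + norm (?h2 - \<theta> F2)" by linarith
        then have Dlow: "d / 2 \<le> norm ?D" using b1 b2 unfolding e1_def by linarith
        then have D2: "d^2 / 4 \<le> (norm ?D)^2"
        proof -
          have "(d/2)^2 \<le> (norm ?D)^2" using Dlow dpos by (intro power_mono) auto
          then show ?thesis by (simp add: power_divide)
        qed
        have "\<not> (norm (?E - \<Sigma>1) > \<eta>)" using nU(5) wsp unfolding SE_def by blast
        then have En: "norm (?E - \<Sigma>1) \<le> min 1 (l / (2 * (real CARD('p) * real CARD('p))))"
          unfolding \<eta>_def Cp_def not_less .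
        have Q: "\<kappa> * (norm ?D)^2 \<le> ?D \<bullet> (matrix_inv ?E *v ?D)"
          using quad_inv_lower[OF lpos lA En, of ?D] unfolding \<kappa>_def Cp_def by simp
        have Q2: "\<kappa> * (d^2 / 4) \<le> ?D \<bullet> (matrix_inv ?E *v ?D)"
        proof -
          have "\<kappa> * (d^2 / 4) \<le> \<kappa> * (norm ?D)^2" using D2 kpos by (intro mult_left_mono) auto
          then show ?thesis using Q by linarith
        qed
        have j0: "cm m - m < Tm m" using lt2 cmf(3)[of m] by linarith
        have e3: "m + (cm m - m) = cm m" using cmf(3)[of m] by simp
        have e4: "Tm m - (cm m - m) = L m" unfolding L_def using cmf(3)[of m] le by linarith
        have det: "(1 / real m ^ 3) * ((real (cm m))\<^sup>2 * (real (L m))\<^sup>2 * (?D \<bullet> (matrix_inv ?E *v ?D)))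
            \<le> detector \<theta> ?xs ?E m (Tm m)"
          using detector_ge[OF j0, of m \<theta> ?xs ?E] unfolding e3 e4 by simp
        have "real m ^ 2 * (real m * c')^2 * (\<kappa> * (d^2 / 4)) \<le> (real (cm m))\<^sup>2 * (real (L m))\<^sup>2 * (?D \<bullet> (matrix_inv ?E *v ?D))"
        proof (intro mult_mono power_mono)
          show "real m \<le> real (cm m)" by (rule cmf(1))
          show "real m * c' \<le> real (L m)" by (rule Lf(3)[OF TN])
        qed (use Q2 kpos dpos c'pos in auto)
        then have "(1 / real m ^ 3) * (real m ^ 2 * (real m * c')^2 * (\<kappa> * (d^2 / 4))) \<le>
            (1 / real m ^ 3) * ((real (cm m))\<^sup>2 * (real (L m))\<^sup>2 * (?D \<bullet> (matrix_inv ?E *v ?D)))"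
          by (intro mult_left_mono) auto
        then have "(1 / real m ^ 3) * (real m ^ 2 * (real m * c')^2 * (\<kappa> * (d^2 / 4))) \<le> detector \<theta> ?xs ?E m (Tm m)"
          using det by linarith
        moreover have "(1 / real m ^ 3) * (real m ^ 2 * (real m * c')^2 * (\<kappa> * (d^2 / 4))) = real m * K0"
          using mT unfolding K0_def by (simp add: field_simps power2_eq_square power3_eq_cube)
        moreover have "w T < real m * K0" using mK K0pos by (simp add: pos_divide_less_eq mult.commute)
        ultimately have dgt: "w T < detector \<theta> ?xs ?E m (Tm m)" by linarith
        have wT: "w (real (Tm m) / real m) = w T" using Tmf(1)[OF TN] mT by simp
        have wpos: "w T > 0" using w_pos T_pos by simp
        have val: "1 < detector \<theta> ?xs ?E m (Tm m) / w (real (Tm m) / real m)"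
          unfolding wT using dgt wpos by (simp add: less_divide_eq_1_pos)
        have Tm1: "Tm m \<in> {1..Tm m}" using j0 by simp
        have "detector \<theta> ?xs ?E m (Tm m) / w (real (Tm m) / real m)
            \<le> Max ((\<lambda>k. detector \<theta> ?xs ?E m k / w (real k / real m)) ` {1..Tm m})"
          by (rule Max_img_ge[OF finite_atLeastAtMost Tm1])
        then show "\<omega> \<in> G m" unfolding G_def using val wsp by simp
      qed
    qed
  qed

  define B where "B = (\<lambda>m. measure M (R1 m) + measure M (R2 m) + measure M (A1 m) + measure M (A2 m) + measure M (SE m))"
  have lower: "eventually (\<lambda>m. 1 - B m \<le> measure M (G m)) FT"
    using core
  proof eventually_elim
    case (elim m)
    have "measure M (U m) \<le> B m"
    proof -
      have "measure M (U m) \<le> measure M (R1 m \<union> R2 m \<union> A1 m \<union> A2 m) + measure M (SE m)"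
        unfolding U_def using R1m R2m A1m A2m SEm by (intro measure_Un_le) auto
      also have "measure M (R1 m \<union> R2 m \<union> A1 m \<union> A2 m) \<le> measure M (R1 m \<union> R2 m \<union> A1 m) + measure M (A2 m)"
        using R1m R2m A1m A2m by (intro measure_Un_le) auto
      also have "measure M (R1 m \<union> R2 m \<union> A1 m) \<le> measure M (R1 m \<union> R2 m) + measure M (A1 m)"
        using R1m R2m A1m by (intro measure_Un_le) auto
      also have "measure M (R1 m \<union> R2 m) \<le> measure M (R1 m) + measure M (R2 m)"
        using R1m R2m by (intro measure_Un_le) auto
      finally show ?thesis unfolding B_def by linarith
    qed
    moreover have "measure M (space M - U m) = 1 - measure M (U m)" using Um M.prob_compl by simp
    moreover have "measure M (space M - U m) \<le> measure M (G m)" using elim Gm by (intro M.finite_measure_mono)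
    ultimately show ?case by linarith
  qed
  have upper: "eventually (\<lambda>m. measure M (G m) \<le> 1) FT" by (intro always_eventually allI M.prob_le_1)
  have "(B \<longlongrightarrow> 0 + 0 + 0 + 0 + 0) FT" unfolding B_def
    by (intro tendsto_add limR1 limR2 limA1 limA2 limSE)
  then have "((\<lambda>m. 1 - B m) \<longlongrightarrow> 1 - 0) FT" by (intro tendsto_diff tendsto_const) simp
  then have lowlim: "((\<lambda>m. 1 - B m) \<longlongrightarrow> 1) FT" by simp
  have "((\<lambda>m. measure M (G m)) \<longlongrightarrow> 1) FT"
    by (rule tendsto_sandwich[OF lower upper lowlim tendsto_const])
  then show ?thesis unfolding G_def .
qed


end
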